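(* Let $G,H$ be finite groups and $f:G\to H$ an identity preserving function such that $[G,G;f]$ is abelian and $n=[G:\mathrm{Stab}_G(f)]$ is relatively prime to $|[G,G;f]|$. Let $a_1,\dots,a_n$ be representatives of the right cosets of $\mathrm{Stab}_G(f)$ in $G$ and let $m$ be an integer with $mn\equiv 1\pmod{|[G,G;f]|}$. Then the distributed average $$\overline{\overline f}(x)=f(x)\Bigl(\prod_{i=1}^n[a_i,x;f]\Bigr)^m$$ is a group homomorphism from $G$ to $H$.
   Context: For $f:G\to H$ and $a\in G$, $f^a(x)=f(a)^{-1}f(ax)$; $f$ is identity preserving if $f(1)=1$. $\mathrm{Stab}_G(f)=\{a\in G: f^a=f\}$ (a subgroup of $G$). The $f$-distributor is $[x,y;f]=f(y)^{-1}f(x)^{-1}f(xy)=f(y)^{-1}f^x(y)$, and $[G,G;f]=\langle [x,y;f]: x,y\in G\rangle$. *)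

theory Defs
  imports "HOL-Algebra.Algebra"
begin

definition distributor :: "('a, 'c) monoid_scheme \<Rightarrow> ('b, 'd) monoid_scheme \<Rightarrow> ('a \<Rightarrow> 'b) \<Rightarrow> 'a \<Rightarrow> 'a \<Rightarrow> 'b" where
  "distributor G H f x y = inv\<^bsub>H\<^esub> (f y) \<otimes>\<^bsub>H\<^esub> inv\<^bsub>H\<^esub> (f x) \<otimes>\<^bsub>H\<^esub> f (x \<otimes>\<^bsub>G\<^esub> y)"

definition distributor_subgroup :: "('a, 'c) monoid_scheme \<Rightarrow> ('b, 'd) monoid_scheme \<Rightarrow> ('a \<Rightarrow> 'b) \<Rightarrow> 'b set" where
  "distributor_subgroup G H f =
     generate H {distributor G H f x y | x y. x \<in> carrier G \<and> y \<in> carrier G}"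

definition shifted :: "('a, 'c) monoid_scheme \<Rightarrow> ('b, 'd) monoid_scheme \<Rightarrow> ('a \<Rightarrow> 'b) \<Rightarrow> 'a \<Rightarrow> 'a \<Rightarrow> 'b" where
  "shifted G H f a x = inv\<^bsub>H\<^esub> (f a) \<otimes>\<^bsub>H\<^esub> f (a \<otimes>\<^bsub>G\<^esub> x)"

definition stab :: "('a, 'c) monoid_scheme \<Rightarrow> ('b, 'd) monoid_scheme \<Rightarrow> ('a \<Rightarrow> 'b) \<Rightarrow> 'a set" where
  "stab G H f = {a \<in> carrier G. \<forall>x \<in> carrier G. shifted G H f a x = f x}"

definition listprod :: "('b, 'd) monoid_scheme \<Rightarrow> 'b list \<Rightarrow> 'b" where
  "listprod H xs = foldr (\<lambda>u v. u \<otimes>\<^bsub>H\<^esub> v) xs \<one>\<^bsub>H\<^esub>"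

end

theory Submission
  imports Defs
begin


locale dctx = G: group G + H: group H
  for G :: "('a, 'c) monoid_scheme" and H :: "('b, 'd) monoid_scheme" +
  fixes f :: "'a \<Rightarrow> 'b"
  assumes f_carr: "f \<in> carrier G \<rightarrow> carrier H"
    and f_one: "f \<one>\<^bsub>G\<^esub> = \<one>\<^bsub>H\<^esub>"
    and Kcomm: "comm_group (H\<lparr>carrier := distributor_subgroup G H f\<rparr>)"
begin

abbreviation "D \<equiv> distributor G H f"
abbreviation "A \<equiv> distributor_subgroup G H f"
abbreviation "S \<equiv> stab G H f"
abbreviation "K \<equiv> H\<lparr>carrier := A\<rparr>"

lemma fc[simp]: "x \<in> carrier G \<Longrightarrow> f x \<in> carrier H"
  using f_carr by auto

lemma Hc1: "x \<in> carrier H \<Longrightarrow> y \<in> carrier H \<Longrightarrow> x \<otimes>\<^bsub>H\<^esub> (inv\<^bsub>H\<^esub> x \<otimes>\<^bsub>H\<^esub> y) = y"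
  by (simp add: H.m_assoc[symmetric])
lemma Hc2: "x \<in> carrier H \<Longrightarrow> y \<in> carrier H \<Longrightarrow> inv\<^bsub>H\<^esub> x \<otimes>\<^bsub>H\<^esub> (x \<otimes>\<^bsub>H\<^esub> y) = y"
  by (simp add: H.m_assoc[symmetric])

lemma D_carr[simp]: "x \<in> carrier G \<Longrightarrow> y \<in> carrier G \<Longrightarrow> D x y \<in> carrier H"
  by (simp add: distributor_def)

lemma A_sub: "subgroup A H"
  unfolding distributor_subgroup_def by (rule H.generate_is_subgroup) auto

lemma D_A[simp]: "x \<in> carrier G \<Longrightarrow> y \<in> carrier G \<Longrightarrow> D x y \<in> A"
  unfolding distributor_subgroup_def by (rule generate.incl) auto

lemma A_carr: "u \<in> A \<Longrightarrow> u \<in> carrier H"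
  by (rule subgroup.mem_carrier[OF A_sub])

lemma Kmult[simp]: "(\<otimes>\<^bsub>K\<^esub>) = (\<otimes>\<^bsub>H\<^esub>)" by simp
lemma Kone[simp]: "\<one>\<^bsub>K\<^esub> = \<one>\<^bsub>H\<^esub>" by simp
lemma Kcarr[simp]: "carrier K = A" by simp

lemma Kcm: "comm_monoid K" using Kcomm unfolding comm_group_def by blast
lemma Kgrp: "group K" using Kcomm unfolding comm_group_def by blast

lemma A_comm: "u \<in> A \<Longrightarrow> v \<in> A \<Longrightarrow> u \<otimes>\<^bsub>H\<^esub> v = v \<otimes>\<^bsub>H\<^esub> u"
  using comm_monoid.m_comm[OF Kcm, of u v] by (simp only: Kmult Kcarr)

lemma stab_mult: "s \<in> S \<Longrightarrow> x \<in> carrier G \<Longrightarrow> f (s \<otimes>\<^bsub>G\<^esub> x) = f s \<otimes>\<^bsub>H\<^esub> f x"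
proof -
  assume s: "s \<in> S" and x: "x \<in> carrier G"
  have sc: "s \<in> carrier G" using s unfolding stab_def by auto
  have "inv\<^bsub>H\<^esub> (f s) \<otimes>\<^bsub>H\<^esub> f (s \<otimes>\<^bsub>G\<^esub> x) = f x"
    using s x unfolding stab_def shifted_def by auto
  then have "f s \<otimes>\<^bsub>H\<^esub> (inv\<^bsub>H\<^esub> (f s) \<otimes>\<^bsub>H\<^esub> f (s \<otimes>\<^bsub>G\<^esub> x)) = f s \<otimes>\<^bsub>H\<^esub> f x"
    by simp
  then show ?thesis using sc x by (simp add: Hc1)
qed

lemma stab_carr: "s \<in> S \<Longrightarrow> s \<in> carrier G" unfolding stab_def by auto

lemma stabI: "s \<in> carrier G \<Longrightarrow> (\<And>x. x \<in> carrier G \<Longrightarrow> f (s \<otimes>\<^bsub>G\<^esub> x) = f s \<otimes>\<^bsub>H\<^esub> f x) \<Longrightarrow> s \<in> S"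
  unfolding stab_def shifted_def by (auto simp: Hc2 H.m_assoc[symmetric])

lemma S_sub: "subgroup S G"
proof (rule G.subgroupI)
  show "S \<subseteq> carrier G" using stab_carr by auto
  show "S \<noteq> {}" using stabI[of "\<one>\<^bsub>G\<^esub>"] f_one by auto
next
  fix s assume s: "s \<in> S"
  have sc: "s \<in> carrier G" using s stab_carr by auto
  have fi0: "f s \<otimes>\<^bsub>H\<^esub> f (inv\<^bsub>G\<^esub> s) = \<one>\<^bsub>H\<^esub>"
    using stab_mult[OF s, of "inv\<^bsub>G\<^esub> s"] sc f_one by simp
  have fi: "f (inv\<^bsub>G\<^esub> s) = inv\<^bsub>H\<^esub> (f s)"
    using H.inv_equality[OF H.inv_comm[OF fi0]] sc by simp
  show "inv\<^bsub>G\<^esub> s \<in> S"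
  proof (rule stabI)
    show "inv\<^bsub>G\<^esub> s \<in> carrier G" using sc by simp
    fix x assume x: "x \<in> carrier G"
    have "f x = f s \<otimes>\<^bsub>H\<^esub> f (inv\<^bsub>G\<^esub> s \<otimes>\<^bsub>G\<^esub> x)"
      using stab_mult[OF s, of "inv\<^bsub>G\<^esub> s \<otimes>\<^bsub>G\<^esub> x"] sc x
      by (simp add: G.m_assoc[symmetric])
    thus "f (inv\<^bsub>G\<^esub> s \<otimes>\<^bsub>G\<^esub> x) = f (inv\<^bsub>G\<^esub> s) \<otimes>\<^bsub>H\<^esub> f x"
      using fi sc x by (simp add: Hc2)
  qed
next
  fix s t assume s: "s \<in> S" and t: "t \<in> S"
  have sc: "s \<in> carrier G" "t \<in> carrier G" using s t stab_carr by auto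
  show "s \<otimes>\<^bsub>G\<^esub> t \<in> S"
  proof (rule stabI)
    show "s \<otimes>\<^bsub>G\<^esub> t \<in> carrier G" using sc by simp
    fix x assume x: "x \<in> carrier G"
    show "f (s \<otimes>\<^bsub>G\<^esub> t \<otimes>\<^bsub>G\<^esub> x) = f (s \<otimes>\<^bsub>G\<^esub> t) \<otimes>\<^bsub>H\<^esub> f x"
      using stab_mult[OF s] stab_mult[OF t] sc x by (simp add: G.m_assoc H.m_assoc)
  qed
qed

lemma D_stab: "s \<in> S \<Longrightarrow> b \<in> carrier G \<Longrightarrow> y \<in> carrier G \<Longrightarrow> D (s \<otimes>\<^bsub>G\<^esub> b) y = D b y"
  using stab_carr[of s] unfolding distributor_def
  by (simp add: stab_mult G.m_assoc H.inv_mult_group H.m_assoc Hc2)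

lemma cocycle: "b \<in> carrier G \<Longrightarrow> x \<in> carrier G \<Longrightarrow> y \<in> carrier G \<Longrightarrow>
  inv\<^bsub>H\<^esub> (f y) \<otimes>\<^bsub>H\<^esub> D b x \<otimes>\<^bsub>H\<^esub> f y \<otimes>\<^bsub>H\<^esub> D (b \<otimes>\<^bsub>G\<^esub> x) y = D x y \<otimes>\<^bsub>H\<^esub> D b (x \<otimes>\<^bsub>G\<^esub> y)"
  unfolding distributor_def by (simp add: G.m_assoc H.m_assoc Hc1 Hc2)

end



context dctx begin

lemma listprod_Cons[simp]: "listprod H (u # xs) = u \<otimes>\<^bsub>H\<^esub> listprod H xs"
  by (simp add: listprod_def)
lemma listprod_Nil[simp]: "listprod H [] = \<one>\<^bsub>H\<^esub>"
  by (simp add: listprod_def)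

lemma listprod_carr: "set xs \<subseteq> carrier H \<Longrightarrow> listprod H xs \<in> carrier H"
  by (induct xs) auto

lemma listprod_finprod:
  "distinct xs \<Longrightarrow> (\<forall>i\<in>set xs. g i \<in> A) \<Longrightarrow> listprod H (map g xs) = finprod K g (set xs)"
proof (induct xs)
  case Nil
  show ?case using comm_monoid.finprod_empty[OF Kcm, of g] by simp
next
  case (Cons x xs)
  have "finprod K g (set (x # xs)) = g x \<otimes>\<^bsub>K\<^esub> finprod K g (set xs)"
    using Cons.prems unfolding list.set(2)
    by (intro comm_monoid.finprod_insert[OF Kcm]) (auto simp: Pi_def)
  then show ?case using Cons by simp
qed

lemma conj_listprod: "c \<in> carrier H \<Longrightarrow> set xs \<subseteq> carrier H \<Longrightarrow>
  inv\<^bsub>H\<^esub> c \<otimes>\<^bsub>H\<^esub> listprod H xs \<otimes>\<^bsub>H\<^esub> c = listprod H (map (\<lambda>u. inv\<^bsub>H\<^esub> c \<otimes>\<^bsub>H\<^esub> u \<otimes>\<^bsub>H\<^esub> c) xs)"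
proof (induct xs)
  case Nil then show ?case by simp
next
  case (Cons u xs)
  have "inv\<^bsub>H\<^esub> c \<otimes>\<^bsub>H\<^esub> listprod H (u # xs) \<otimes>\<^bsub>H\<^esub> c
     = (inv\<^bsub>H\<^esub> c \<otimes>\<^bsub>H\<^esub> u \<otimes>\<^bsub>H\<^esub> c) \<otimes>\<^bsub>H\<^esub> (inv\<^bsub>H\<^esub> c \<otimes>\<^bsub>H\<^esub> listprod H xs \<otimes>\<^bsub>H\<^esub> c)"
    using Cons.prems listprod_carr[of xs] by (simp add: H.m_assoc Hc1)
  then show ?case using Cons by simp
qed

lemma conj_hom: "c \<in> carrier H \<Longrightarrow> (\<lambda>u. inv\<^bsub>H\<^esub> c \<otimes>\<^bsub>H\<^esub> u \<otimes>\<^bsub>H\<^esub> c) \<in> hom H H"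
  by (rule homI) (auto simp: H.m_assoc Hc1)

end

locale dctx2 = dctx +
  fixes a :: "nat \<Rightarrow> 'a" and n :: nat
  assumes a_carr: "a ` {1..n} \<subseteq> carrier G"
    and a_bij: "bij_betw (\<lambda>i. stab G H f #>\<^bsub>G\<^esub> a i) {1..n} (rcosets\<^bsub>G\<^esub> (stab G H f))"
begin

definition "P x = listprod H (map (\<lambda>i. D (a i) x) [1..<Suc n])"

lemma ac[simp]: "i \<in> {1..n} \<Longrightarrow> a i \<in> carrier G"
  using a_carr by auto

lemma P_fin: "x \<in> carrier G \<Longrightarrow> P x = finprod K (\<lambda>i. D (a i) x) {1..n}"
proof -
  assume x: "x \<in> carrier G"
  have e: "set [1..<Suc n] = {1..n}" by (simp only: set_upt atLeastLessThanSuc_atLeastAtMost)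
  have "listprod H (map (\<lambda>i. D (a i) x) [1..<Suc n]) = finprod K (\<lambda>i. D (a i) x) (set [1..<Suc n])"
    by (rule listprod_finprod) (use x e in auto)
  then show ?thesis unfolding P_def e .
qed

lemma P_A: "x \<in> carrier G \<Longrightarrow> P x \<in> A"
proof -
  assume x: "x \<in> carrier G"
  have "finprod K (\<lambda>i. D (a i) x) {1..n} \<in> carrier K"
    by (rule comm_monoid.finprod_closed[OF Kcm]) (auto simp: x)
  then show ?thesis using P_fin[OF x] by simp
qed

lemma reindex: "x \<in> carrier G \<Longrightarrow> y \<in> carrier G \<Longrightarrow>
  finprod K (\<lambda>i. D (a i \<otimes>\<^bsub>G\<^esub> x) y) {1..n} = P y"
proof -
  assume x: "x \<in> carrier G" and y: "y \<in> carrier G"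
  define I where "I = {1..n::nat}"
  define c where "c = (\<lambda>j. S #>\<^bsub>G\<^esub> a j)"
  define \<sigma> where "\<sigma> = (\<lambda>i. the_inv_into I c (S #>\<^bsub>G\<^esub> (a i \<otimes>\<^bsub>G\<^esub> x)))"
  have injc: "inj_on c I" and imc: "c ` I = rcosets\<^bsub>G\<^esub> S"
    using a_bij unfolding I_def c_def bij_betw_def by auto
  have aI: "a j \<in> carrier G" if "j \<in> I" for j using that I_def by simp
  have Ssub: "S \<subseteq> carrier G" using S_sub subgroup.subset by blast
  have inr: "S #>\<^bsub>G\<^esub> (a i \<otimes>\<^bsub>G\<^esub> x) \<in> c ` I" if "i \<in> I" for i
    using imc that x I_def by (auto intro!: G.rcosetsI Ssub)
  have \<sigma>I: "\<sigma> i \<in> I" if "i \<in> I" for i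
    unfolding \<sigma>_def by (rule the_inv_into_into[OF injc inr[OF that]]) auto
  have c\<sigma>: "c (\<sigma> i) = S #>\<^bsub>G\<^esub> (a i \<otimes>\<^bsub>G\<^esub> x)" if "i \<in> I" for i
    unfolding \<sigma>_def by (rule f_the_inv_into_f[OF injc inr[OF that]])
  have bk: "(S #>\<^bsub>G\<^esub> (b \<otimes>\<^bsub>G\<^esub> x)) #>\<^bsub>G\<^esub> inv\<^bsub>G\<^esub> x = S #>\<^bsub>G\<^esub> b" if "b \<in> carrier G" for b
    using that x Ssub by (simp add: G.coset_mult_assoc G.m_assoc)
  have inj\<sigma>: "inj_on \<sigma> I"
  proof (rule inj_onI)
    fix i j assume i: "i \<in> I" and j: "j \<in> I" and e: "\<sigma> i = \<sigma> j"
    have "S #>\<^bsub>G\<^esub> (a i \<otimes>\<^bsub>G\<^esub> x) = S #>\<^bsub>G\<^esub> (a j \<otimes>\<^bsub>G\<^esub> x)"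
      using c\<sigma>[OF i] c\<sigma>[OF j] e by simp
    then have "S #>\<^bsub>G\<^esub> a i = S #>\<^bsub>G\<^esub> a j"
      using bk[of "a i"] bk[of "a j"] i j I_def by simp
    then show "i = j" using injc i j unfolding c_def inj_on_def by blast
  qed
  have im\<sigma>: "\<sigma> ` I = I"
    by (rule endo_inj_surj) (auto simp: I_def[symmetric] \<sigma>I inj\<sigma>, simp add: I_def)
  have eq: "D (a (\<sigma> i)) y = D (a i \<otimes>\<^bsub>G\<^esub> x) y" if i: "i \<in> I" for i
  proof -
    have ai: "a i \<otimes>\<^bsub>G\<^esub> x \<in> carrier G" using i I_def x by simp
    have "a i \<otimes>\<^bsub>G\<^esub> x \<in> S #>\<^bsub>G\<^esub> a (\<sigma> i)"
      using c\<sigma>[OF i] G.rcos_self[OF ai S_sub] unfolding c_def by simp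
    then obtain s where s: "s \<in> S" and e: "a i \<otimes>\<^bsub>G\<^esub> x = s \<otimes>\<^bsub>G\<^esub> a (\<sigma> i)"
      unfolding r_coset_def by auto
    show ?thesis using e D_stab[OF s, of "a (\<sigma> i)" y] \<sigma>I[OF i] I_def y by simp
  qed
  have "P y = finprod K (\<lambda>i. D (a i) y) (\<sigma> ` I)"
    using P_fin[OF y] im\<sigma> I_def by simp
  also have "\<dots> = finprod K (\<lambda>i. D (a (\<sigma> i)) y) I"
    by (rule comm_monoid.finprod_reindex[OF Kcm]) (auto simp: inj\<sigma> im\<sigma> y aI \<sigma>I)
  also have "\<dots> = finprod K (\<lambda>i. D (a i \<otimes>\<^bsub>G\<^esub> x) y) I"
    by (rule comm_monoid.finprod_cong[OF Kcm]) (auto simp: eq Pi_def x y aI)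
  finally show ?thesis using I_def by simp
qed

end



context dctx begin

lemma A_m: "u \<in> A \<Longrightarrow> v \<in> A \<Longrightarrow> u \<otimes>\<^bsub>H\<^esub> v \<in> A"
  by (rule subgroup.m_closed[OF A_sub])
lemma A_inv: "u \<in> A \<Longrightarrow> inv\<^bsub>H\<^esub> u \<in> A"
  by (rule subgroup.m_inv_closed[OF A_sub])

lemma ipc: "u \<in> A \<Longrightarrow> u [^]\<^bsub>H\<^esub> (k::int) = u [^]\<^bsub>K\<^esub> k"
  by (rule H.int_pow_consistent[OF A_sub])

lemma A_ipow: "u \<in> A \<Longrightarrow> u [^]\<^bsub>H\<^esub> (k::int) \<in> A"
  using ipc[of u k] group.int_pow_closed[OF Kgrp, of u k] by simp

lemma ipow_distrib: "u \<in> A \<Longrightarrow> v \<in> A \<Longrightarrow>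
  (u \<otimes>\<^bsub>H\<^esub> v) [^]\<^bsub>H\<^esub> (k::int) = u [^]\<^bsub>H\<^esub> k \<otimes>\<^bsub>H\<^esub> v [^]\<^bsub>H\<^esub> k"
proof -
  assume u: "u \<in> A" and v: "v \<in> A"
  have "(u \<otimes>\<^bsub>K\<^esub> v) [^]\<^bsub>K\<^esub> k = u [^]\<^bsub>K\<^esub> k \<otimes>\<^bsub>K\<^esub> v [^]\<^bsub>K\<^esub> k"
    by (rule comm_group.int_pow_distrib[OF Kcomm]) (use u v in simp_all)
  then show ?thesis using ipc[OF A_m[OF u v], of k] ipc[OF u, of k] ipc[OF v, of k] by simp
qed

lemma pow_card_A: "u \<in> A \<Longrightarrow> u [^]\<^bsub>H\<^esub> int (card A) = \<one>\<^bsub>H\<^esub>"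
proof -
  assume u: "u \<in> A"
  have "u [^]\<^bsub>K\<^esub> order K = \<one>\<^bsub>K\<^esub>"
    by (rule group.pow_order_eq_1[OF Kgrp]) (use u in simp)
  then have "u [^]\<^bsub>K\<^esub> card A = \<one>\<^bsub>H\<^esub>" by (simp add: order_def)
  then show ?thesis using H.nat_pow_consistent[of u "card A" A] by (simp add: int_pow_int)
qed

lemma pow_mod: assumes u: "u \<in> A" and e: "(k::int) mod int (card A) = 1 mod int (card A)"
  shows "u [^]\<^bsub>H\<^esub> k = u"
proof -
  have uc: "u \<in> carrier H" using u A_carr by blast
  have "int (card A) dvd (k - 1)" using e by (simp add: mod_eq_dvd_iff)
  then obtain q where q: "k = 1 + int (card A) * q" by (auto simp: dvd_def algebra_simps)
  have "u [^]\<^bsub>H\<^esub> k = u [^]\<^bsub>H\<^esub> (1::int) \<otimes>\<^bsub>H\<^esub> u [^]\<^bsub>H\<^esub> (int (card A) * q)"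
    unfolding q by (rule H.int_pow_mult[OF uc])
  also have "u [^]\<^bsub>H\<^esub> (int (card A) * q) = (u [^]\<^bsub>H\<^esub> int (card A)) [^]\<^bsub>H\<^esub> q"
    by (rule H.int_pow_pow[OF uc, symmetric])
  also have "\<dots> = \<one>\<^bsub>H\<^esub>" using pow_card_A[OF u] by simp
  finally show ?thesis using uc by simp
qed

end

context dctx2 begin

lemma key: assumes x: "x \<in> carrier G" and y: "y \<in> carrier G"
  shows "inv\<^bsub>H\<^esub> (f y) \<otimes>\<^bsub>H\<^esub> P x \<otimes>\<^bsub>H\<^esub> f y \<in> A"
    and "inv\<^bsub>H\<^esub> (f y) \<otimes>\<^bsub>H\<^esub> P x \<otimes>\<^bsub>H\<^esub> f y \<otimes>\<^bsub>H\<^esub> P y = D x y [^]\<^bsub>H\<^esub> n \<otimes>\<^bsub>H\<^esub> P (x \<otimes>\<^bsub>G\<^esub> y)"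
proof -
  define I where "I = {1..n}"
  have aI: "a j \<in> carrier G" if "j \<in> I" for j using that I_def by simp
  define cj where "cj = (\<lambda>u. inv\<^bsub>H\<^esub> (f y) \<otimes>\<^bsub>H\<^esub> u \<otimes>\<^bsub>H\<^esub> f y)"
  define t where "t = (\<lambda>i. cj (D (a i) x))"
  have fy: "f y \<in> carrier H" using y by simp
  have tc: "t i \<otimes>\<^bsub>H\<^esub> D (a i \<otimes>\<^bsub>G\<^esub> x) y = D x y \<otimes>\<^bsub>H\<^esub> D (a i) (x \<otimes>\<^bsub>G\<^esub> y)" if i: "i \<in> I" for i
    unfolding t_def cj_def by (rule cocycle[OF aI[OF i] x y])
  have tA: "t i \<in> A" if i: "i \<in> I" for i
  proof -
    have tcar: "t i \<in> carrier H" unfolding t_def cj_def using aI[OF i] x y by simp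
    have Ec: "D (a i \<otimes>\<^bsub>G\<^esub> x) y \<in> carrier H" using aI[OF i] x y by simp
    have "t i = D x y \<otimes>\<^bsub>H\<^esub> D (a i) (x \<otimes>\<^bsub>G\<^esub> y) \<otimes>\<^bsub>H\<^esub> inv\<^bsub>H\<^esub> (D (a i \<otimes>\<^bsub>G\<^esub> x) y)"
      using tc[OF i, symmetric] tcar Ec by (simp add: H.m_assoc)
    then show ?thesis using aI[OF i] x y by (simp add: A_m A_inv)
  qed
  have e: "set [1..<Suc n] = I" unfolding I_def by (simp only: set_upt atLeastLessThanSuc_atLeastAtMost)
  have "cj (P x) = listprod H (map cj (map (\<lambda>i. D (a i) x) [1..<Suc n]))"
    unfolding cj_def P_def by (rule conj_listprod[OF fy]) (use aI e x in auto)
  also have "\<dots> = listprod H (map t [1..<Suc n])" by (simp only: map_map comp_def t_def)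
  also have "\<dots> = finprod K t I"
    using listprod_finprod[of "[1..<Suc n]" t] tA unfolding e by (simp only: distinct_upt) blast
  finally have cP: "cj (P x) = finprod K t I" .
  show "inv\<^bsub>H\<^esub> (f y) \<otimes>\<^bsub>H\<^esub> P x \<otimes>\<^bsub>H\<^esub> f y \<in> A"
    using cP comm_monoid.finprod_closed[OF Kcm, of t I] tA unfolding cj_def by auto
  have "cj (P x) \<otimes>\<^bsub>H\<^esub> P y = finprod K t I \<otimes>\<^bsub>K\<^esub> finprod K (\<lambda>i. D (a i \<otimes>\<^bsub>G\<^esub> x) y) I"
    using cP reindex[OF x y] I_def by simp
  also have "\<dots> = finprod K (\<lambda>i. t i \<otimes>\<^bsub>K\<^esub> D (a i \<otimes>\<^bsub>G\<^esub> x) y) I"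
    by (rule comm_monoid.finprod_multf[OF Kcm, symmetric]) (auto simp: tA aI x y)
  also have "\<dots> = finprod K (\<lambda>i. D x y \<otimes>\<^bsub>K\<^esub> D (a i) (x \<otimes>\<^bsub>G\<^esub> y)) I"
    by (rule comm_monoid.finprod_cong[OF Kcm]) (auto simp: tc aI x y Pi_def A_m)
  also have "\<dots> = finprod K (\<lambda>i. D x y) I \<otimes>\<^bsub>K\<^esub> finprod K (\<lambda>i. D (a i) (x \<otimes>\<^bsub>G\<^esub> y)) I"
    by (rule comm_monoid.finprod_multf[OF Kcm]) (auto simp: aI x y)
  also have "finprod K (\<lambda>i. D x y) I = D x y [^]\<^bsub>K\<^esub> card I"
    by (rule comm_monoid.finprod_const[OF Kcm]) (use x y in simp)
  also have "card I = n" unfolding I_def by simp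
  also have "D x y [^]\<^bsub>K\<^esub> n = D x y [^]\<^bsub>H\<^esub> n"
    using H.nat_pow_consistent[of "D x y" n A] by simp
  also have "finprod K (\<lambda>i. D (a i) (x \<otimes>\<^bsub>G\<^esub> y)) I = P (x \<otimes>\<^bsub>G\<^esub> y)"
    using P_fin[of "x \<otimes>\<^bsub>G\<^esub> y"] x y I_def by simp
  finally show "inv\<^bsub>H\<^esub> (f y) \<otimes>\<^bsub>H\<^esub> P x \<otimes>\<^bsub>H\<^esub> f y \<otimes>\<^bsub>H\<^esub> P y = D x y [^]\<^bsub>H\<^esub> n \<otimes>\<^bsub>H\<^esub> P (x \<otimes>\<^bsub>G\<^esub> y)"
    unfolding cj_def by simp
qed

end



context dctx2 begin

lemma hom_main: assumes mn: "(m * int n) mod int (card A) = 1 mod int (card A)"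
  shows "(\<lambda>x. f x \<otimes>\<^bsub>H\<^esub> P x [^]\<^bsub>H\<^esub> m) \<in> hom G H"
proof (rule homI)
  fix x assume x: "x \<in> carrier G"
  show "f x \<otimes>\<^bsub>H\<^esub> P x [^]\<^bsub>H\<^esub> m \<in> carrier H"
    using x P_A[OF x] A_carr by simp
next
  fix x y assume x: "x \<in> carrier G" and y: "y \<in> carrier G"
  define u where "u = inv\<^bsub>H\<^esub> (f y) \<otimes>\<^bsub>H\<^esub> P x \<otimes>\<^bsub>H\<^esub> f y"
  define d where "d = D x y"
  define w where "w = P (x \<otimes>\<^bsub>G\<^esub> y)"
  have xy: "x \<otimes>\<^bsub>G\<^esub> y \<in> carrier G" using x y by simp
  have uA: "u \<in> A" unfolding u_def by (rule key(1)[OF x y])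
  have uv: "u \<otimes>\<^bsub>H\<^esub> P y = d [^]\<^bsub>H\<^esub> n \<otimes>\<^bsub>H\<^esub> w"
    unfolding u_def d_def w_def by (rule key(2)[OF x y])
  have dA: "d \<in> A" unfolding d_def using x y by simp
  have wA: "w \<in> A" unfolding w_def using P_A[OF xy] .
  have PxA: "P x \<in> A" by (rule P_A[OF x])
  have PyA: "P y \<in> A" by (rule P_A[OF y])
  have dnA: "d [^]\<^bsub>H\<^esub> n \<in> A" using A_ipow[OF dA, of "int n"] by (simp add: int_pow_int)
  have cH: "z \<in> A \<Longrightarrow> z \<in> carrier H" for z using A_carr by blast
  have fx: "f x \<in> carrier H" and fy: "f y \<in> carrier H" using x y by simp_all
  have conj: "inv\<^bsub>H\<^esub> (f y) \<otimes>\<^bsub>H\<^esub> P x [^]\<^bsub>H\<^esub> m \<otimes>\<^bsub>H\<^esub> f y = u [^]\<^bsub>H\<^esub> m"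
    unfolding u_def
    using hom_int_pow[OF conj_hom[OF fy] cH[OF PxA] H.is_group H.is_group, of m] by simp
  have step1: "P x [^]\<^bsub>H\<^esub> m \<otimes>\<^bsub>H\<^esub> f y = f y \<otimes>\<^bsub>H\<^esub> u [^]\<^bsub>H\<^esub> m"
    unfolding conj[symmetric] using fy cH[OF PxA] by (simp add: H.m_assoc Hc1)
  have step2: "u [^]\<^bsub>H\<^esub> m \<otimes>\<^bsub>H\<^esub> P y [^]\<^bsub>H\<^esub> m = d \<otimes>\<^bsub>H\<^esub> w [^]\<^bsub>H\<^esub> m"
  proof -
    have "u [^]\<^bsub>H\<^esub> m \<otimes>\<^bsub>H\<^esub> P y [^]\<^bsub>H\<^esub> m = (u \<otimes>\<^bsub>H\<^esub> P y) [^]\<^bsub>H\<^esub> m"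
      by (rule ipow_distrib[OF uA PyA, symmetric])
    also have "\<dots> = (d [^]\<^bsub>H\<^esub> n) [^]\<^bsub>H\<^esub> m \<otimes>\<^bsub>H\<^esub> w [^]\<^bsub>H\<^esub> m"
      unfolding uv by (rule ipow_distrib[OF dnA wA])
    also have "(d [^]\<^bsub>H\<^esub> n) [^]\<^bsub>H\<^esub> m = d [^]\<^bsub>H\<^esub> (int n * m)"
      using H.int_pow_pow[OF cH[OF dA], of "int n" m] by (simp add: int_pow_int)
    also have "\<dots> = d" by (rule pow_mod[OF dA]) (use mn in \<open>simp add: mult.commute\<close>)
    finally show ?thesis .
  qed
  have fxy: "f x \<otimes>\<^bsub>H\<^esub> (f y \<otimes>\<^bsub>H\<^esub> d) = f (x \<otimes>\<^bsub>G\<^esub> y)"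
    unfolding d_def distributor_def using fx fy xy by (simp add: H.m_assoc Hc1)
  have "f x \<otimes>\<^bsub>H\<^esub> P x [^]\<^bsub>H\<^esub> m \<otimes>\<^bsub>H\<^esub> (f y \<otimes>\<^bsub>H\<^esub> P y [^]\<^bsub>H\<^esub> m)
      = f x \<otimes>\<^bsub>H\<^esub> (P x [^]\<^bsub>H\<^esub> m \<otimes>\<^bsub>H\<^esub> f y) \<otimes>\<^bsub>H\<^esub> P y [^]\<^bsub>H\<^esub> m"
    using fx fy cH[OF PxA] cH[OF PyA] by (simp add: H.m_assoc)
  also have "\<dots> = f x \<otimes>\<^bsub>H\<^esub> (f y \<otimes>\<^bsub>H\<^esub> (u [^]\<^bsub>H\<^esub> m \<otimes>\<^bsub>H\<^esub> P y [^]\<^bsub>H\<^esub> m))"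
    unfolding step1 using fx fy cH[OF uA] cH[OF PyA] by (simp add: H.m_assoc)
  also have "\<dots> = f x \<otimes>\<^bsub>H\<^esub> (f y \<otimes>\<^bsub>H\<^esub> d) \<otimes>\<^bsub>H\<^esub> w [^]\<^bsub>H\<^esub> m"
    unfolding step2 using fx fy cH[OF dA] cH[OF wA] by (simp add: H.m_assoc)
  finally show "f (x \<otimes>\<^bsub>G\<^esub> y) \<otimes>\<^bsub>H\<^esub> P (x \<otimes>\<^bsub>G\<^esub> y) [^]\<^bsub>H\<^esub> m =
      f x \<otimes>\<^bsub>H\<^esub> P x [^]\<^bsub>H\<^esub> m \<otimes>\<^bsub>H\<^esub> (f y \<otimes>\<^bsub>H\<^esub> P y [^]\<^bsub>H\<^esub> m)"
    unfolding fxy w_def by simp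
qed

end

theorem mainTheorem12:
  fixes G :: "('a, 'c) monoid_scheme" and H :: "('b, 'd) monoid_scheme"
    and f :: "'a \<Rightarrow> 'b" and a :: "nat \<Rightarrow> 'a" and n :: nat and m :: int
  assumes "group G" and "group H"
    and "finite (carrier G)" and "finite (carrier H)"
    and "f \<in> carrier G \<rightarrow> carrier H"
    and "f \<one>\<^bsub>G\<^esub> = \<one>\<^bsub>H\<^esub>"
    and "comm_group (H\<lparr>carrier := distributor_subgroup G H f\<rparr>)"
    and "n = card (rcosets\<^bsub>G\<^esub> (stab G H f))"
    and "coprime n (card (distributor_subgroup G H f))"
    and "a ` {1..n} \<subseteq> carrier G"
    and "bij_betw (\<lambda>i. stab G H f #>\<^bsub>G\<^esub> a i) {1..n} (rcosets\<^bsub>G\<^esub> (stab G H f))"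
    and "(m * int n) mod int (card (distributor_subgroup G H f)) = 1 mod int (card (distributor_subgroup G H f))"
  shows "(\<lambda>x. f x \<otimes>\<^bsub>H\<^esub>
            (listprod H (map (\<lambda>i. distributor G H f (a i) x) [1..<Suc n])) [^]\<^bsub>H\<^esub> m)
         \<in> hom G H"
proof -
  interpret D2: dctx2 G H f a n
  proof (intro dctx2.intro dctx.intro dctx2_axioms.intro dctx_axioms.intro)
    show "group G" by (rule assms(1))
    show "group H" by (rule assms(2))
    show "f \<in> carrier G \<rightarrow> carrier H" by (rule assms(5))
    show "f \<one>\<^bsub>G\<^esub> = \<one>\<^bsub>H\<^esub>" by (rule assms(6))
    show "comm_group (H\<lparr>carrier := distributor_subgroup G H f\<rparr>)" by (rule assms(7))
    show "a ` {1..n} \<subseteq> carrier G" by (rule assms(10))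
    show "bij_betw (\<lambda>i. stab G H f #>\<^bsub>G\<^esub> a i) {1..n} (rcosets\<^bsub>G\<^esub> (stab G H f))" by (rule assms(11))
  qed
  show ?thesis using D2.hom_main[OF assms(12)] unfolding D2.P_def .
qed

end
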